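(* Let $G\leq\operatorname{Homeo}(\mathfrak{C})$. If $G$ is vigorous then $G$ is lawless, i.e., there is no non-trivial freely reduced word $w$ in letters $x_1^{\pm1},\dots,x_j^{\pm 1}$ such that $w(g_1,\dots,g_j)=1_G$ for all $(g_1,\dots,g_j)\in G^j$.
   Context: $\mathfrak{C}$ denotes a Cantor space (a space homeomorphic to $\{0,1\}^\omega$). For $\gamma\in\operatorname{Homeo}(\mathfrak{C})$, $\operatorname{supp}(\gamma)=\{p\in\mathfrak{C}: p\gamma\neq p\}$ (right actions). A subset $S\subseteq \operatorname{Homeo}(\mathfrak{C})$ is vigorous if for all clopen $A,B,C\subseteq\mathfrak{C}$ with $B,C$ non-empty proper subsets of $A$ there is $\gamma\in S$ with $\operatorname{supp}(\gamma)\subseteq A$ and $B\gamma\subseteq C$. *)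

theory Defs
  imports "HOL-Analysis.Analysis"
begin

definition cantor :: "(nat \<Rightarrow> bool) topology" where
  "cantor = product_topology (\<lambda>_. discrete_topology UNIV) UNIV"

type_synonym cpt = "nat \<Rightarrow> bool"

definition Homeo_C :: "(cpt \<Rightarrow> cpt) set" where
  "Homeo_C = {f. homeomorphic_map cantor cantor f}"

text \<open>Right actions: the product g*h acts as p(gh) = (pg)h, i.e. the function h o g.\<close>
definition cmult :: "(cpt \<Rightarrow> cpt) \<Rightarrow> (cpt \<Rightarrow> cpt) \<Rightarrow> (cpt \<Rightarrow> cpt)" where
  "cmult g h = h \<circ> g"

definition homeo_subgroup :: "(cpt \<Rightarrow> cpt) set \<Rightarrow> bool" where
  "homeo_subgroup G \<longleftrightarrow> G \<subseteq> Homeo_C \<and> id \<in> G \<and>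
     (\<forall>g\<in>G. \<forall>h\<in>G. cmult g h \<in> G) \<and> (\<forall>g\<in>G. inv g \<in> G)"

definition supp :: "(cpt \<Rightarrow> cpt) \<Rightarrow> cpt set" where
  "supp \<gamma> = {p \<in> topspace cantor. \<gamma> p \<noteq> p}"

definition clopen_C :: "cpt set \<Rightarrow> bool" where
  "clopen_C A \<longleftrightarrow> openin cantor A \<and> closedin cantor A"

definition vigorous :: "(cpt \<Rightarrow> cpt) set \<Rightarrow> bool" where
  "vigorous S \<longleftrightarrow> (\<forall>A B C. clopen_C A \<and> clopen_C B \<and> clopen_C C \<and>
      B \<noteq> {} \<and> C \<noteq> {} \<and> B \<subset> A \<and> C \<subset> A \<longrightarrow>
      (\<exists>\<gamma>\<in>S. supp \<gamma> \<subseteq> A \<and> \<gamma> ` B \<subseteq> C))"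

text \<open>Words in letters x_i^{+-1}: a letter is (i, True) for x_i and (i, False) for x_i^{-1}.\<close>
type_synonym letter = "nat \<times> bool"

fun freely_reduced :: "letter list \<Rightarrow> bool" where
  "freely_reduced [] = True"
| "freely_reduced [_] = True"
| "freely_reduced (a # b # w) \<longleftrightarrow> \<not> (fst a = fst b \<and> snd a \<noteq> snd b) \<and> freely_reduced (b # w)"

fun word_eval :: "(nat \<Rightarrow> cpt \<Rightarrow> cpt) \<Rightarrow> letter list \<Rightarrow> cpt \<Rightarrow> cpt" where
  "word_eval g [] = id"
| "word_eval g (a # w) = cmult (if snd a then g (fst a) else inv (g (fst a))) (word_eval g w)"

definition lawless :: "(cpt \<Rightarrow> cpt) set \<Rightarrow> bool" where
  "lawless G \<longleftrightarrow> \<not> (\<exists>j w. w \<noteq> [] \<and> freely_reduced w \<and> (\<forall>a\<in>set w. fst a < j) \<and>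
      (\<forall>g. (\<forall>i<j. g i \<in> G) \<longrightarrow> word_eval g w = id))"

end

theory Submission
  imports Defs
begin

lemma top_cantor: "topspace cantor = UNIV"
  by (simp add: cantor_def)

definition D :: "nat \<Rightarrow> cpt set" where
  "D k = {p. \<forall>m<Suc k. p m = (m = k)}"

lemma clopen_cyl: "clopen_C {p. \<forall>m<k. p m = f m}"
proof (induction k)
  case 0
  then show ?case by (simp add: clopen_C_def flip: top_cantor)
next
  case (Suc k)
  have e: "{p. \<forall>m<Suc k. p m = f m} = {p. \<forall>m<k. p m = f m} \<inter> {p. p k = f k}"
    by (auto simp: less_Suc_eq)
  have c: "continuous_map cantor (discrete_topology UNIV) (\<lambda>x. x k)"
    unfolding cantor_def by (rule continuous_map_product_projection) simp
  have o: "openin cantor {p. p k = f k}"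
    using openin_continuous_map_preimage[OF c, of "{f k}"] by (simp add: top_cantor)
  have cl: "closedin cantor {p. p k = f k}"
    using closedin_continuous_map_preimage[OF c, of "{f k}"] by (simp add: top_cantor)
  show ?case using Suc o cl unfolding e clopen_C_def by (auto intro: openin_Int closedin_Int)
qed

lemma clopen_D: "clopen_C (D k)"
  unfolding D_def using clopen_cyl[of "Suc k" "\<lambda>m. m = k"] by simp

lemma D_disj: "k \<noteq> l \<Longrightarrow> D k \<inter> D l = {}"
proof (rule ccontr)
  assume kl: "k \<noteq> l" and "D k \<inter> D l \<noteq> {}"
  then obtain p where p: "\<forall>m<Suc k. p m = (m = k)" "\<forall>m<Suc l. p m = (m = l)"
    unfolding D_def by blast
  show False
  proof (cases "k < l")
    case True
    then show False using p(1)[rule_format, of k] p(2)[rule_format, of k] by simp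
  next
    case False
    then have "l < k" using kl by simp
    then show False using p(1)[rule_format, of l] p(2)[rule_format, of l] by simp
  qed
qed

lemma D_ne: "(\<lambda>m. m = k) \<in> D k"
  unfolding D_def by auto

lemma clopen_compl: "clopen_C S \<Longrightarrow> clopen_C (UNIV - S)"
  unfolding clopen_C_def
  using closedin_diff[of cantor UNIV S] openin_diff[of cantor UNIV S]
  by (simp add: top_cantor flip: top_cantor)

definition T :: "letter \<Rightarrow> cpt set" where
  "T a = D (2 * fst a + (if snd a then 1 else 2))"

definition phi :: "(nat \<Rightarrow> cpt \<Rightarrow> cpt) \<Rightarrow> letter \<Rightarrow> cpt \<Rightarrow> cpt" where
  "phi g a = (if snd a then g (fst a) else inv (g (fst a)))"

lemma word_eval_cons: "word_eval g (a # w) p = word_eval g w (phi g a p)"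
  by (simp add: cmult_def phi_def)

lemma pingpong:
  assumes step: "\<And>a p. p \<notin> T (fst a, \<not> snd a) \<Longrightarrow> phi g a p \<in> T a"
  shows "w \<noteq> [] \<Longrightarrow> freely_reduced w \<Longrightarrow> p \<notin> T (fst (hd w), \<not> snd (hd w))
     \<Longrightarrow> word_eval g w p \<in> T (last w)"
proof (induction w arbitrary: p rule: freely_reduced.induct)
  case 1 then show ?case by simp
next
  case (2 a) then show ?case using step by (simp add: word_eval_cons del: word_eval.simps(2))
next
  case (3 a b w)
  have in1: "phi g a p \<in> T a" using 3 step by simp
  have neq: "T a \<inter> T (fst b, \<not> snd b) = {}"
    unfolding T_def using 3(3) by (intro D_disj) (auto; presburger)
  have "phi g a p \<notin> T (fst b, \<not> snd b)" using in1 neq by blast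
  then have "word_eval g (b # w) (phi g a p) \<in> T (last (b # w))"
    using 3 by simp
  then show ?case by (simp add: word_eval_cons del: word_eval.simps(2))
qed

theorem theorem1p2:
  assumes "homeo_subgroup G" and "vigorous G"
  shows "lawless G"
proof -
  have cu: "clopen_C UNIV"
    unfolding clopen_C_def using closedin_topspace[of cantor] openin_topspace[of cantor]
    by (simp add: top_cantor)
  have vig: "\<And>A B C. clopen_C A \<Longrightarrow> clopen_C B \<Longrightarrow> clopen_C C \<Longrightarrow>
      B \<noteq> {} \<Longrightarrow> C \<noteq> {} \<Longrightarrow> B \<subset> A \<Longrightarrow> C \<subset> A \<Longrightarrow>
      (\<exists>\<gamma>\<in>G. supp \<gamma> \<subseteq> A \<and> \<gamma> ` B \<subseteq> C)"
    using assms(2) unfolding vigorous_def by blast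
  have ex: "\<exists>\<gamma>\<in>G. \<gamma> ` (UNIV - D (2*i+2)) \<subseteq> D (2*i+1)" for i
  proof -
    have d1: "D 0 \<inter> D (2*i+2) = {}" "D 0 \<inter> D (2*i+1) = {}" by (simp_all add: D_disj)
    have n1: "UNIV - D (2*i+2) \<noteq> {}" using D_ne[of 0] d1(1) by blast
    have n2: "UNIV - D (2*i+2) \<subset> UNIV" using D_ne[of "2*i+2"] by blast
    have n3: "D (2*i+1) \<noteq> {}" using D_ne[of "2*i+1"] by blast
    have n4: "D (2*i+1) \<subset> UNIV" using D_ne[of 0] d1(2) by blast
    from vig[OF cu clopen_compl[OF clopen_D] clopen_D n1 n3 n2 n4]
    show ?thesis by blast
  qed
  define g where "g i = (SOME \<gamma>. \<gamma> \<in> G \<and> \<gamma> ` (UNIV - D (2*i+2)) \<subseteq> D (2*i+1))" for i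
  have gG: "g i \<in> G" and gmap: "g i ` (UNIV - D (2*i+2)) \<subseteq> D (2*i+1)" for i
    using someI_ex[OF ex[of i, unfolded Bex_def]] unfolding g_def by auto
  have bij: "bij (g i)" for i
  proof -
    have "homeomorphic_map cantor cantor (g i)"
      using gG assms(1) unfolding homeo_subgroup_def Homeo_C_def by blast
    then have "g i ` UNIV = UNIV" "inj_on (g i) UNIV"
      using homeomorphic_imp_surjective_map homeomorphic_imp_injective_map top_cantor
      by metis+
    then show ?thesis by (simp add: bij_def)
  qed
  have step: "phi g a p \<in> T a" if "p \<notin> T (fst a, \<not> snd a)" for a p
  proof (cases "snd a")
    case True
    then show ?thesis using that gmap[of "fst a"] unfolding T_def phi_def by auto
  next
    case False
    let ?i = "fst a"
    let ?r = "inv (g ?i) p"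
    have gr: "g ?i ?r = p" using bij[of ?i] by (simp add: bij_def surj_f_inv_f)
    have "?r \<in> D (2 * ?i + 2)"
    proof (rule ccontr)
      assume "?r \<notin> D (2 * ?i + 2)"
      then have "g ?i ?r \<in> D (2 * ?i + 1)" using gmap[of ?i] by blast
      then show False using that False gr unfolding T_def by auto
    qed
    then show ?thesis using False unfolding T_def phi_def by simp
  qed
  show ?thesis unfolding lawless_def
  proof
    assume "\<exists>j w. w \<noteq> [] \<and> freely_reduced w \<and> (\<forall>a\<in>set w. fst a < j) \<and>
      (\<forall>g. (\<forall>i<j. g i \<in> G) \<longrightarrow> word_eval g w = id)"
    then obtain j w where w: "w \<noteq> []" "freely_reduced w"
      and law: "\<forall>g. (\<forall>i<j. g i \<in> G) \<longrightarrow> word_eval g w = id" by blast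
    have id: "word_eval g w = id" using law gG by blast
    let ?p = "\<lambda>m::nat. m = 0"
    have pn: "?p \<notin> T b" for b
      using D_ne[of 0] D_disj[of 0 "2 * fst b + (if snd b then 1 else 2)"] unfolding T_def by auto
    have "word_eval g w ?p \<in> T (last w)"
      using pingpong[OF step] w pn by blast
    then show False using id pn by simp
  qed
qed

end
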